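(* Let $\mathcal{M}$ be a $k\times\ell$ gridding matrix whose cell graph $G_\mathcal{M}$ is disconnected. Choose a connected component of $G_\mathcal{M}$, let $\mathcal{M}_1$ be the submatrix of $\mathcal{M}$ formed by the rows and columns containing vertices of this component, and $\mathcal{M}_2$ the submatrix formed by the remaining rows and columns. For an $\mathcal{M}$-gridded permutation $\pi$, let $\pi_1$ and $\pi_2$ be the subpermutations of $\pi$ formed by the points lying in the cells of $\mathcal{M}_1$ and of $\mathcal{M}_2$, respectively. Then $\mathrm{gw}(\pi)\le\max(\mathrm{gw}(\pi_1),\mathrm{gw}(\pi_2))+\max(k,\ell)$.
   Context: Permutations of length $n$ are identified with their diagrams $\{(i,\pi_i)\}$. A $k\times\ell$ gridding matrix $\mathcal{M}$ has permutation classes as entries. An $\mathcal{M}$-gridding of $\pi$ of length $n$ consists of possibly empty disjoint integer intervals $I_1<\dots<I_k$, $J_1<\dots<J_\ell$, each family with union $[n]$, such that the points in each cell $I_i\times J_j$ form a pattern in $\mathcal{M}_{i,j}$; an $\mathcal{M}$-gridded permutation is a permutation with a fixed $\mathcal{M}$-gridding. The cell graph $G_\mathcal{M}$ has as vertices the cells with infinite entries, adjacent when they share a row or column and all cells strictly between them are finite or empty; assume all entries of $\mathcal{M}$ are infinite or empty. Intervalicity of $A\subseteq[n]$ is the least number of disjoint integer intervals with union $A$; grid-complexity of a point set is the maximum of the intervalicities of its two axis projections. A grid tree of $\pi$ is a rooted binary tree with leaves labeled bijectively by points of $\pi$; its grid-width is the maximum over vertices $v$ of the grid-complexity of the leaf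 labels below $v$; $\mathrm{gw}(\pi)$ is the minimum grid-width over grid trees of $\pi$ (for a subpermutation, computed on its standardization, equivalently on its point set). *)

theory Defs
  imports Main
begin

definition is_perm :: "nat list \<Rightarrow> bool" where
  "is_perm p \<longleftrightarrow> distinct p \<and> set p = {1..length p}"

definition diagram :: "nat list \<Rightarrow> (nat \<times> nat) set" where
  "diagram p = {(Suc i, p ! i) | i. i < length p}"

text \<open>sigma is the standardization (pattern) of the point set S: there are
  strictly increasing maps on both axes carrying the diagram of sigma onto S.\<close>

definition std_of :: "(nat \<times> nat) set \<Rightarrow> nat list \<Rightarrow> bool" where
  "std_of S \<sigma> \<longleftrightarrow> is_perm \<sigma> \<and>
     (\<exists>f g. strict_mono_on {1..length \<sigma>} f \<and> strict_mono_on {1..length \<sigma>} g \<and>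
            (\<lambda>(a, b). (f a, g b)) ` diagram \<sigma> = S)"

definition std :: "(nat \<times> nat) set \<Rightarrow> nat list" where
  "std S = (THE \<sigma>. std_of S \<sigma>)"

definition contains :: "nat list \<Rightarrow> nat list \<Rightarrow> bool" where
  "contains \<pi> \<tau> \<longleftrightarrow> (\<exists>S \<subseteq> diagram \<pi>. std_of S \<tau>)"

definition perm_class :: "nat list set \<Rightarrow> bool" where
  "perm_class C \<longleftrightarrow> (\<forall>\<sigma>\<in>C. is_perm \<sigma>) \<and> (\<forall>\<sigma>\<in>C. \<forall>\<tau>. contains \<sigma> \<tau> \<longrightarrow> \<tau> \<in> C)"

text \<open>Column intervals I_i = {c i <.. c (i+1)} for i < k, row intervals
  J_j = {r j <.. r (j+1)} for j < l (0-based cell indices), possibly empty.\<close>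

definition cell_pts :: "nat list \<Rightarrow> (nat \<Rightarrow> nat) \<Rightarrow> (nat \<Rightarrow> nat) \<Rightarrow> nat \<Rightarrow> nat \<Rightarrow> (nat \<times> nat) set" where
  "cell_pts \<pi> c r i j = {p \<in> diagram \<pi>. c i < fst p \<and> fst p \<le> c (Suc i) \<and> r j < snd p \<and> snd p \<le> r (Suc j)}"

definition is_gridding ::
  "(nat \<Rightarrow> nat \<Rightarrow> nat list set) \<Rightarrow> nat \<Rightarrow> nat \<Rightarrow> nat list \<Rightarrow> (nat \<Rightarrow> nat) \<Rightarrow> (nat \<Rightarrow> nat) \<Rightarrow> bool" where
  "is_gridding M k l \<pi> c r \<longleftrightarrow>
     c 0 = 0 \<and> c k = length \<pi> \<and> (\<forall>i<k. c i \<le> c (Suc i)) \<and>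
     r 0 = 0 \<and> r l = length \<pi> \<and> (\<forall>j<l. r j \<le> r (Suc j)) \<and>
     (\<forall>i<k. \<forall>j<l. cell_pts \<pi> c r i j \<noteq> {} \<longrightarrow> (\<exists>\<sigma>\<in>M i j. std_of (cell_pts \<pi> c r i j) \<sigma>))"

definition cg_vertex :: "(nat \<Rightarrow> nat \<Rightarrow> nat list set) \<Rightarrow> nat \<Rightarrow> nat \<Rightarrow> nat \<times> nat \<Rightarrow> bool" where
  "cg_vertex M k l v \<longleftrightarrow> fst v < k \<and> snd v < l \<and> infinite (M (fst v) (snd v))"

definition cg_edges :: "(nat \<Rightarrow> nat \<Rightarrow> nat list set) \<Rightarrow> nat \<Rightarrow> nat \<Rightarrow> ((nat \<times> nat) \<times> (nat \<times> nat)) set" where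
  "cg_edges M k l = {((i, j), (i', j')). cg_vertex M k l (i, j) \<and> cg_vertex M k l (i', j') \<and> (i, j) \<noteq> (i', j') \<and>
      ((i = i' \<and> (\<forall>j''. min j j' < j'' \<and> j'' < max j j' \<longrightarrow> \<not> infinite (M i j''))) \<or>
       (j = j' \<and> (\<forall>i''. min i i' < i'' \<and> i'' < max i i' \<longrightarrow> \<not> infinite (M i'' j))))}"

definition cg_connected :: "(nat \<Rightarrow> nat \<Rightarrow> nat list set) \<Rightarrow> nat \<Rightarrow> nat \<Rightarrow> bool" where
  "cg_connected M k l \<longleftrightarrow>
     (\<forall>u w. cg_vertex M k l u \<and> cg_vertex M k l w \<longrightarrow> (u, w) \<in> (cg_edges M k l)\<^sup>*)"

definition cg_component :: "(nat \<Rightarrow> nat \<Rightarrow> nat list set) \<Rightarrow> nat \<Rightarrow> nat \<Rightarrow> nat \<times> nat \<Rightarrow> (nat \<times> nat) set" where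
  "cg_component M k l v0 = {w. cg_vertex M k l w \<and> (v0, w) \<in> (cg_edges M k l)\<^sup>*}"

definition comp_cols :: "(nat \<times> nat) set \<Rightarrow> nat set" where
  "comp_cols V = fst ` V"

definition comp_rows :: "(nat \<times> nat) set \<Rightarrow> nat set" where
  "comp_rows V = snd ` V"

definition sub_pts :: "nat list \<Rightarrow> (nat \<Rightarrow> nat) \<Rightarrow> (nat \<Rightarrow> nat) \<Rightarrow> nat set \<Rightarrow> nat set \<Rightarrow> (nat \<times> nat) set" where
  "sub_pts \<pi> c r Cs Rs = (\<Union>i\<in>Cs. \<Union>j\<in>Rs. cell_pts \<pi> c r i j)"

definition intervalicity :: "nat set \<Rightarrow> nat" where
  "intervalicity A = (LEAST m. \<exists>F. finite F \<and> card F = m \<and>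
       (\<forall>I\<in>F. \<exists>a b. a \<le> b \<and> I = {a..b}) \<and> pairwise disjnt F \<and> \<Union>F = A)"

definition grid_complexity :: "(nat \<times> nat) set \<Rightarrow> nat" where
  "grid_complexity S = max (intervalicity (fst ` S)) (intervalicity (snd ` S))"

datatype 'a gtree = GLeaf 'a | GNode "'a gtree" "'a gtree"

fun leaves :: "'a gtree \<Rightarrow> 'a list" where
  "leaves (GLeaf x) = [x]"
| "leaves (GNode l r) = leaves l @ leaves r"

fun subtrees :: "'a gtree \<Rightarrow> 'a gtree set" where
  "subtrees (GLeaf x) = {GLeaf x}"
| "subtrees (GNode l r) = insert (GNode l r) (subtrees l \<union> subtrees r)"

definition grid_tree :: "(nat \<times> nat) set \<Rightarrow> (nat \<times> nat) gtree \<Rightarrow> bool" where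
  "grid_tree S t \<longleftrightarrow> distinct (leaves t) \<and> set (leaves t) = S"

definition grid_width :: "(nat \<times> nat) gtree \<Rightarrow> nat" where
  "grid_width t = Max ((\<lambda>s. grid_complexity (set (leaves s))) ` subtrees t)"

text \<open>gw of a permutation; the empty permutation has gw 0 by convention.\<close>
definition gw :: "nat list \<Rightarrow> nat" where
  "gw \<pi> = (if \<pi> = [] then 0 else (LEAST w. \<exists>t. grid_tree (diagram \<pi>) t \<and> grid_width t = w))"

end

theory Submission
  imports Defs "HOL-Library.Infinite_Set"
begin


definition starts :: "nat set \<Rightarrow> nat set" where
  "starts X = {x\<in>X. x = 0 \<or> x - 1 \<notin> X}"

lemma starts_lower:
  assumes "\<forall>I\<in>F. \<exists>a b. a \<le> b \<and> I = {a..b}" "\<Union>F = X" "finite F"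
  shows "card (starts X) \<le> card F"
proof -
  have "starts X \<subseteq> Min ` F"
  proof
    fix x assume x: "x \<in> starts X"
    then have "x \<in> X" by (simp add: starts_def)
    then obtain I where I: "I \<in> F" "x \<in> I" using assms(2) by blast
    then obtain a b where ab: "a \<le> b" "I = {a..b}" using assms(1) by blast
    have "a = x"
    proof (rule ccontr)
      assume "a \<noteq> x"
      then have "a < x" using I ab by auto
      then have "x - 1 \<in> I" using I ab by auto
      then have "x - 1 \<in> X" using I assms(2) by blast
      with x \<open>a < x\<close> show False by (auto simp: starts_def)
    qed
    then have "Min I = x" using ab by (intro Min_eqI) auto
    then have "x = Min I" by simp
    then show "x \<in> Min ` F" using I by blast
  qed
  then show ?thesis by (meson assms(3) card_image_le card_mono finite_imageI le_trans)
qed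

lemma starts_upper:
  assumes fin: "finite X"
  shows "\<exists>F. finite F \<and> card F = card (starts X) \<and>
       (\<forall>I\<in>F. \<exists>a b. a \<le> b \<and> I = {a..b}) \<and> pairwise disjnt F \<and> \<Union>F = X"
proof -
  define e where "e s = (LEAST e. s \<le> e \<and> Suc e \<notin> X)" for s
  have eP: "s \<le> e s \<and> Suc (e s) \<notin> X" for s
  proof -
    have "s \<le> Max (insert s X) \<and> Suc (Max (insert s X)) \<notin> X"
    proof
      show "s \<le> Max (insert s X)" using fin by simp
      show "Suc (Max (insert s X)) \<notin> X"
      proof
        assume "Suc (Max (insert s X)) \<in> X"
        then have "Suc (Max (insert s X)) \<le> Max (insert s X)" using fin by simp
        then show False by simp
      qed
    qed
    then show ?thesis unfolding e_def by (rule LeastI)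
  qed
  have eL: "s \<le> y \<Longrightarrow> y < e s \<Longrightarrow> Suc y \<in> X" for s y
    using not_less_Least[of y "\<lambda>e. s \<le> e \<and> Suc e \<notin> X"] unfolding e_def by auto
  have sub: "s \<in> X \<Longrightarrow> {s..e s} \<subseteq> X" for s
  proof
    fix y assume s: "s \<in> X" and y: "y \<in> {s..e s}"
    then have "s \<le> y" "y \<le> e s" by auto
    then show "y \<in> X"
    proof (induction y rule: dec_induct)
      case base then show ?case using s by simp
    next
      case (step n) then show ?case using eL by auto
    qed
  qed
  define F where "F = (\<lambda>s. {s..e s}) ` starts X"
  have finS: "finite (starts X)" using fin by (simp add: starts_def)
  have inj: "inj_on (\<lambda>s. {s..e s}) (starts X)"
  proof (rule inj_onI)
    fix s s' assume "{s..e s} = {s'..e s'}"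
    then show "s = s'" using eP[of s] eP[of s'] by (metis atLeastAtMost_iff le_antisym order_refl)
  qed
  have c1: "card F = card (starts X)" unfolding F_def using inj by (simp add: card_image)
  have c2: "\<forall>I\<in>F. \<exists>a b. a \<le> b \<and> I = {a..b}" unfolding F_def using eP by blast
  have c3: "pairwise disjnt F"
  proof (unfold F_def, rule pairwise_imageI)
    fix s s' assume s: "s \<in> starts X" and s': "s' \<in> starts X" and ne: "s \<noteq> s'"
    have aux: "s \<in> starts X \<Longrightarrow> s' \<in> starts X \<Longrightarrow> s < s' \<Longrightarrow> disjnt {s..e s} {s'..e s'}" for s s'
    proof (rule ccontr)
      assume a: "s \<in> starts X" "s' \<in> starts X" "s < s'" "\<not> disjnt {s..e s} {s'..e s'}"
      then obtain y where y: "s \<le> y" "y \<le> e s" "s' \<le> y" by (auto simp: disjnt_def)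
      have "s \<in> X" using a by (simp add: starts_def)
      then have "s' - 1 \<in> {s..e s}" using y a(3) by auto
      then have "s' - 1 \<in> X" using sub[OF \<open>s \<in> X\<close>] by blast
      then show False using a(2,3) by (auto simp: starts_def)
    qed
    show "disjnt {s..e s} {s'..e s'}"
    proof (cases "s < s'")
      case True then show ?thesis using aux s s' by blast
    next
      case False then have "s' < s" using ne by simp
      then show ?thesis using aux s s' by (metis disjnt_sym)
    qed
  qed
  have c4: "\<Union>F = X"
  proof
    show "\<Union>F \<subseteq> X" unfolding F_def using sub by (auto simp: starts_def)
    show "X \<subseteq> \<Union>F"
    proof
      fix x assume x: "x \<in> X"
      define s where "s = (LEAST s. s \<le> x \<and> {s..x} \<subseteq> X)"
      have sP: "s \<le> x \<and> {s..x} \<subseteq> X" unfolding s_def by (rule LeastI[of _ x]) (use x in auto)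
      have sX: "s \<in> X" using sP by auto
      have sS: "s \<in> starts X"
      proof (rule ccontr)
        assume "s \<notin> starts X"
        then have "s \<noteq> 0" "s - 1 \<in> X" using sX by (auto simp: starts_def)
        have "{s - 1..x} \<subseteq> insert (s - 1) {s..x}" by auto
        then have "s - 1 \<le> x \<and> {s - 1..x} \<subseteq> X" using sP \<open>s - 1 \<in> X\<close> by auto
        then have "s \<le> s - 1" unfolding s_def by (rule Least_le)
        then show False using \<open>s \<noteq> 0\<close> by simp
      qed
      have "x \<le> e s"
      proof (rule ccontr)
        assume "\<not> x \<le> e s"
        then have "Suc (e s) \<in> {s..x}" using eP[of s] by auto
        then have "Suc (e s) \<in> X" using sP by blast
        then show False using eP[of s] by blast
      qed
      then show "x \<in> \<Union>F" unfolding F_def using sS sP by auto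
    qed
  qed
  have "finite F" unfolding F_def using finS by simp
  then show ?thesis using c1 c2 c3 c4 by blast
qed

lemma intervalicity_starts:
  assumes "finite X" shows "intervalicity X = card (starts X)"
  unfolding intervalicity_def
proof (rule Least_equality)
  show "\<exists>F. finite F \<and> card F = card (starts X) \<and>
       (\<forall>I\<in>F. \<exists>a b. a \<le> b \<and> I = {a..b}) \<and> pairwise disjnt F \<and> \<Union>F = X"
    using starts_upper[OF assms] .
next
  fix m assume "\<exists>F. finite F \<and> card F = m \<and>
       (\<forall>I\<in>F. \<exists>a b. a \<le> b \<and> I = {a..b}) \<and> pairwise disjnt F \<and> \<Union>F = X"
  then show "card (starts X) \<le> m" using starts_lower by blast
qed




lemma starts_sub: "starts X \<subseteq> X" by (auto simp: starts_def)

lemma starts_image: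
  assumes sm: "strict_mono_on {1..m} f" and B: "B \<subseteq> {1..m}"
  shows "starts (f`B) \<subseteq> f ` starts B \<union> starts (f`{1..m})"
proof
  fix y assume y: "y \<in> starts (f`B)"
  then obtain b where b: "b\<in>B" "y = f b" by (auto simp: starts_def)
  show "y \<in> f ` starts B \<union> starts (f`{1..m})"
  proof (cases "b \<in> starts B")
    case True then show ?thesis using b by auto
  next
    case False
    then have b1: "b \<noteq> 0" "b - 1 \<in> B" using b by (auto simp: starts_def)
    have "y \<in> starts (f`{1..m})"
    proof (rule ccontr)
      assume "y \<notin> starts (f ` {1..m})"
      moreover have "y \<in> f`{1..m}" using b B by auto
      ultimately have y0: "y \<noteq> 0" "y - 1 \<in> f`{1..m}" by (auto simp: starts_def)
      then obtain a where a: "a \<in> {1..m}" "f a = y - 1" by auto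
      have bm: "b \<in> {1..m}" "b - 1 \<in> {1..m}" using b b1 B by auto
      have "f a < f b" using a y0 b by simp
      then have "a < b" using strict_mono_on_less[OF sm a(1) bm(1)] by simp
      then have "a \<le> b - 1" by simp
      then have "f a \<le> f (b - 1)" using strict_mono_on_less_eq[OF sm a(1) bm(2)] by simp
      moreover have "f (b - 1) < f b" using strict_mono_onD[OF sm bm(2) bm(1)] b1 by simp
      ultimately have "f (b - 1) = y - 1" using a b by linarith
      then have "y - 1 \<in> f`B" using b1 by (metis image_eqI)
      then show False using y y0 by (auto simp: starts_def)
    qed
    then show ?thesis by blast
  qed
qed

lemma card_starts_image:
  assumes sm: "strict_mono_on {1..m} f" and B: "B \<subseteq> {1..m}"
  shows "card (starts (f`B)) \<le> card (starts B) + card (starts (f`{1..m}))"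
proof -
  have fB: "finite B" using B finite_subset by blast
  have f1: "finite (f ` starts B)" using fB starts_sub by (meson finite_imageI finite_subset)
  have f2: "finite (starts (f`{1..m}))" using starts_sub by (meson finite_atLeastAtMost finite_imageI finite_subset)
  have "card (starts (f`B)) \<le> card (f ` starts B \<union> starts (f`{1..m}))"
    using starts_image[OF sm B] f1 f2 by (intro card_mono) auto
  also have "\<dots> \<le> card (f ` starts B) + card (starts (f`{1..m}))" by (rule card_Un_le)
  also have "\<dots> \<le> card (starts B) + card (starts (f`{1..m}))" using card_image_le fB starts_sub
    by (metis add_le_mono1 finite_subset)
  finally show ?thesis .
qed

section \<open>Standardization\<close>

lemma diagram_fst: "fst ` diagram \<sigma> = {1..length \<sigma>}"
proof
  show "fst ` diagram \<sigma> \<subseteq> {1..length \<sigma>}" by (auto simp: diagram_def)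
  show "{1..length \<sigma>} \<subseteq> fst ` diagram \<sigma>"
  proof
    fix x assume x: "x \<in> {1..length \<sigma>}"
    then have "(x, \<sigma> ! (x - 1)) \<in> diagram \<sigma>" unfolding diagram_def by (auto intro!: exI[of _ "x - 1"])
    then show "x \<in> fst ` diagram \<sigma>" by force
  qed
qed

lemma diagram_snd: "snd ` diagram \<sigma> = set \<sigma>"
  by (auto simp: diagram_def in_set_conv_nth image_iff)

lemma diagram_eq: "diagram \<sigma> = (\<lambda>i. (Suc i, \<sigma> ! i)) ` {..<length \<sigma>}"
  by (auto simp: diagram_def)

lemma diagram_finite: "finite (diagram \<sigma>)" by (simp add: diagram_eq)

lemma diagram_card: "card (diagram \<sigma>) = length \<sigma>"
  unfolding diagram_eq by (subst card_image) (auto simp: inj_on_def)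

lemma diagram_fun: "(a, b) \<in> diagram \<sigma> \<Longrightarrow> (a, b') \<in> diagram \<sigma> \<Longrightarrow> b = b'"
  by (auto simp: diagram_def)

lemma phi_inj:
  fixes f g :: "nat \<Rightarrow> nat"
  assumes "strict_mono_on {1..length \<sigma>} f"
  shows "inj_on (\<lambda>(a, b). (f a, g b)) (diagram \<sigma>)"
proof (rule inj_onI, clarify)
  fix a b a' b' assume p: "(a, b) \<in> diagram \<sigma>" "(a', b') \<in> diagram \<sigma>" "f a = f a'" "g b = g b'"
  have "a \<in> {1..length \<sigma>}" "a' \<in> {1..length \<sigma>}" using p diagram_fst by (metis fst_conv image_eqI)+
  then have "a = a'" using p(3) strict_mono_on_eq[OF assms] by blast
  then show "a = a' \<and> b = b'" using p diagram_fun by blast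
qed

lemma perm_snd: "is_perm \<sigma> \<Longrightarrow> snd ` diagram \<sigma> = {1..length \<sigma>}"
  by (simp add: diagram_snd is_perm_def)

lemma sm_same_image:
  fixes m :: nat and f f' :: "nat \<Rightarrow> nat"
  shows "strict_mono_on {1..m} f \<Longrightarrow> strict_mono_on {1..m} f' \<Longrightarrow> f`{1..m} = f'`{1..m}
    \<Longrightarrow> i \<in> {1..m} \<Longrightarrow> f i = f' i"
proof (induction m arbitrary: i)
  case 0 then show ?case by simp
next
  case (Suc m)
  have mx: "h (Suc m) = Max (h ` {1..Suc m})" if sm: "strict_mono_on {1..Suc m} h" for h :: "nat \<Rightarrow> nat"
  proof (rule sym, rule Max_eqI)
    show "finite (h ` {1..Suc m})" by simp
    show "h (Suc m) \<in> h ` {1..Suc m}" by simp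
    fix y assume "y \<in> h ` {1..Suc m}"
    then obtain a where "a \<in> {1..Suc m}" "y = h a" by auto
    then show "y \<le> h (Suc m)" using strict_mono_on_less_eq[OF sm, of a "Suc m"] by auto
  qed
  have dr: "h ` {1..m} = h ` {1..Suc m} - {h (Suc m)}" if sm: "strict_mono_on {1..Suc m} h" for h :: "nat \<Rightarrow> nat"
  proof
    show "h ` {1..m} \<subseteq> h ` {1..Suc m} - {h (Suc m)}"
    proof
      fix y assume "y \<in> h ` {1..m}"
      then obtain a where a: "a \<in> {1..m}" "y = h a" by auto
      then have "h a < h (Suc m)" using strict_mono_onD[OF sm, of a "Suc m"] by auto
      then show "y \<in> h ` {1..Suc m} - {h (Suc m)}" using a by auto
    qed
    show "h ` {1..Suc m} - {h (Suc m)} \<subseteq> h ` {1..m}"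
    proof
      fix y assume "y \<in> h ` {1..Suc m} - {h (Suc m)}"
      then obtain a where a: "a \<in> {1..Suc m}" "y = h a" "h a \<noteq> h (Suc m)" by auto
      then have "a \<noteq> Suc m" by auto
      then have "a \<in> {1..m}" using a by auto
      then show "y \<in> h ` {1..m}" using a by auto
    qed
  qed
  have eqS: "f (Suc m) = f' (Suc m)" using mx[OF Suc.prems(1)] mx[OF Suc.prems(2)] Suc.prems(3) by simp
  show ?case
  proof (cases "i = Suc m")
    case True then show ?thesis using eqS by simp
  next
    case False
    then have i: "i \<in> {1..m}" using Suc.prems(4) by auto
    have sub: "{1..m} \<subseteq> {1..Suc m}" by auto
    have "f ` {1..m} = f' ` {1..m}" using dr[OF Suc.prems(1)] dr[OF Suc.prems(2)] Suc.prems(3) eqS by simp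
    then show ?thesis using Suc.IH[OF monotone_on_subset[OF Suc.prems(1) sub] monotone_on_subset[OF Suc.prems(2) sub] _ i] by simp
  qed
qed

lemma fst_phi: "fst ` ((\<lambda>(a, b). (f a, g b)) ` D) = f ` (fst ` D)"
  by (simp add: image_image split_def)

lemma snd_phi: "snd ` ((\<lambda>(a, b). (f a, g b)) ` D) = g ` (snd ` D)"
  by (simp add: image_image split_def)

lemma std_of_unique:
  assumes s1: "std_of S \<sigma>" and s2: "std_of S \<tau>"
  shows "\<sigma> = \<tau>"
proof -
  obtain f g where fg: "strict_mono_on {1..length \<sigma>} f" "strict_mono_on {1..length \<sigma>} g"
    "(\<lambda>(a, b). (f a, g b)) ` diagram \<sigma> = S" and p1: "is_perm \<sigma>"
    using s1 unfolding std_of_def by blast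
  obtain f' g' where fg': "strict_mono_on {1..length \<tau>} f'" "strict_mono_on {1..length \<tau>} g'"
    "(\<lambda>(a, b). (f' a, g' b)) ` diagram \<tau> = S" and p2: "is_perm \<tau>"
    using s2 unfolding std_of_def by blast
  have c1: "card S = length \<sigma>" using fg(3) phi_inj[OF fg(1)] card_image diagram_card by metis
  have c2: "card S = length \<tau>" using fg'(3) phi_inj[OF fg'(1)] card_image diagram_card by metis
  define m where "m = length \<sigma>"
  have lt: "length \<tau> = m" using c1 c2 m_def by simp
  have fx: "fst ` S = f ` {1..m}"
    unfolding fg(3)[symmetric] m_def diagram_fst[symmetric] by (rule fst_phi)
  have fx': "fst ` S = f' ` {1..m}"
    unfolding fg'(3)[symmetric] lt[symmetric] diagram_fst[symmetric] by (rule fst_phi)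
  have gy: "snd ` S = g ` {1..m}"
    unfolding fg(3)[symmetric] m_def perm_snd[OF p1, symmetric] by (rule snd_phi)
  have gy': "snd ` S = g' ` {1..m}"
    unfolding fg'(3)[symmetric] lt[symmetric] perm_snd[OF p2, symmetric] by (rule snd_phi)
  have smf: "strict_mono_on {1..m} f" "strict_mono_on {1..m} g" using fg m_def by auto
  have smf': "strict_mono_on {1..m} f'" "strict_mono_on {1..m} g'" using fg' lt by auto
  have fe: "f ` {1..m} = f' ` {1..m}" using fx fx' by (rule trans[OF sym])
  have ge: "g ` {1..m} = g' ` {1..m}" using gy gy' by (rule trans[OF sym])
  have ff: "\<And>i. i \<in> {1..m} \<Longrightarrow> f i = f' i" using sm_same_image[OF smf(1) smf'(1) fe] by blast
  have gg: "\<And>i. i \<in> {1..m} \<Longrightarrow> g i = g' i" using sm_same_image[OF smf(2) smf'(2) ge] by blast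
  have ds: "diagram \<sigma> \<subseteq> diagram \<tau>"
  proof (clarify)
    fix a b assume ab: "(a, b) \<in> diagram \<sigma>"
    have am: "a \<in> {1..m}" using ab diagram_fst m_def by (metis fst_conv image_eqI)
    have bm: "b \<in> {1..m}" using ab perm_snd[OF p1] m_def by (metis snd_conv image_eqI)
    have "(f a, g b) \<in> S" using ab fg(3) by (metis (no_types, lifting) case_prod_conv image_eqI)
    then obtain q where q: "q \<in> diagram \<tau>" "(f a, g b) = (\<lambda>(a, b). (f' a, g' b)) q"
      using fg'(3) by blast
    obtain a' b' where "q = (a', b')" by (cases q)
    then have ab': "(a', b') \<in> diagram \<tau>" "f a = f' a'" "g b = g' b'" using q by auto
    have am': "a' \<in> {1..m}" using ab' diagram_fst lt by (metis fst_conv image_eqI)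
    have bm': "b' \<in> {1..m}" using ab' perm_snd[OF p2] lt by (metis snd_conv image_eqI)
    have "a = a'" using ab'(2) ff[OF am'] strict_mono_on_eq[OF smf(1) am am'] by simp
    moreover have "b = b'" using ab'(3) gg[OF bm'] strict_mono_on_eq[OF smf(2) bm bm'] by simp
    ultimately show "(a, b) \<in> diagram \<tau>" using ab' by simp
  qed
  have "diagram \<sigma> = diagram \<tau>"
    using ds c1 c2 diagram_card diagram_finite by (metis card_subset_eq)
  then show ?thesis
  proof -
    assume d: "diagram \<sigma> = diagram \<tau>"
    show ?thesis
    proof (rule nth_equalityI)
      show "length \<sigma> = length \<tau>" using lt m_def by simp
      fix i assume i: "i < length \<sigma>"
      then have "(Suc i, \<sigma> ! i) \<in> diagram \<sigma>" by (auto simp: diagram_def)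
      then have "(Suc i, \<sigma> ! i) \<in> diagram \<tau>" using d by simp
      moreover have "(Suc i, \<tau> ! i) \<in> diagram \<tau>" using i lt m_def by (auto simp: diagram_def)
      ultimately show "\<sigma> ! i = \<tau> ! i" using diagram_fun by blast
    qed
  qed
qed




lemma std_of_exists:
  fixes S :: "(nat \<times> nat) set"
  assumes fin: "finite S" and i1: "inj_on fst S" and i2: "inj_on snd S"
  shows "\<exists>\<sigma>. std_of S \<sigma>"
proof -
  define m where "m = card S"
  have cx: "card (fst`S) = m" using card_image[OF i1] m_def by simp
  have cy: "card (snd`S) = m" using card_image[OF i2] m_def by simp
  obtain hx where hx: "bij_betw hx {..<card (fst`S)} (fst`S)" "strict_mono_on {..<card (fst`S)} hx"
    using ex_bij_betw_strict_mono_card[of "fst`S"] fin by blast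
  obtain hy where hy: "bij_betw hy {..<card (snd`S)} (snd`S)" "strict_mono_on {..<card (snd`S)} hy"
    using ex_bij_betw_strict_mono_card[of "snd`S"] fin by blast
  note hx = hx[unfolded cx] and hy = hy[unfolded cy]
  define p where "p i = inv_into S fst (hx i)" for i
  have pS: "p i \<in> S \<and> fst (p i) = hx i" if "i < m" for i
  proof -
    have "hx i \<in> fst ` S" using hx(1) that by (simp add: bij_betw_apply)
    then show ?thesis unfolding p_def by (simp add: inv_into_into f_inv_into_f)
  qed
  define \<rho> where "\<rho> i = inv_into {..<m} hy (snd (p i))" for i
  have \<rho>P: "\<rho> i < m \<and> hy (\<rho> i) = snd (p i)" if "i < m" for i
  proof -
    have "snd (p i) \<in> snd ` S" using pS[OF that] by simp
    then have "snd (p i) \<in> hy ` {..<m}" using hy(1) by (simp add: bij_betw_def)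
    then show ?thesis unfolding \<rho>_def using inv_into_into[of "snd (p i)" hy "{..<m}"] f_inv_into_f[of "snd (p i)" hy "{..<m}"]
      by simp
  qed
  define \<sigma> where "\<sigma> = map (\<lambda>i. Suc (\<rho> i)) [0..<m]"
  have len: "length \<sigma> = m" by (simp add: \<sigma>_def)
  have nth: "\<sigma> ! i = Suc (\<rho> i)" if "i < m" for i using that by (simp add: \<sigma>_def)
  have injhx: "inj_on hx {..<m}" using hx(1) by (simp add: bij_betw_def)
  have injp: "inj_on p {..<m}"
  proof (rule inj_onI)
    fix i j assume ij: "i \<in> {..<m}" "j \<in> {..<m}" "p i = p j"
    have e1: "fst (p i) = hx i" using pS[of i] ij(1) by blast
    have e2: "fst (p j) = hx j" using pS[of j] ij(2) by blast
    have "hx i = hx j" unfolding e1[symmetric] e2[symmetric] ij(3) ..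
    then show "i = j" using inj_onD[OF injhx _ ij(1) ij(2)] by simp
  qed
  have inj\<rho>: "inj_on \<rho> {..<m}"
  proof (rule inj_onI)
    fix i j assume ij: "i \<in> {..<m}" "j \<in> {..<m}" "\<rho> i = \<rho> j"
    have e1: "hy (\<rho> i) = snd (p i)" using \<rho>P[of i] ij(1) by blast
    have e2: "hy (\<rho> j) = snd (p j)" using \<rho>P[of j] ij(2) by blast
    have "snd (p i) = snd (p j)" unfolding e1[symmetric] e2[symmetric] ij(3) ..
    moreover have "p i \<in> S" "p j \<in> S" using pS[of i] pS[of j] ij by auto
    ultimately have "p i = p j" using inj_onD[OF i2] by simp
    then show "i = j" using inj_onD[OF injp _ ij(1) ij(2)] by simp
  qed
  have dist: "distinct \<sigma>" unfolding \<sigma>_def distinct_map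
    using inj\<rho> by (auto simp: inj_on_def)
  have ss: "set \<sigma> \<subseteq> {1..m}" unfolding \<sigma>_def using \<rho>P by (auto simp: Suc_le_eq)
  have setS: "set \<sigma> = {1..m}"
    using card_subset_eq[OF _ ss] distinct_card[OF dist] len by simp
  have perm: "is_perm \<sigma>" unfolding is_perm_def using dist setS len by simp
  define f where "f a = hx (a - 1)" for a
  define g where "g b = hy (b - 1)" for b
  have smf: "strict_mono_on {1..m} f"
  proof (rule strict_mono_onI)
    fix r s :: nat assume "r \<in> {1..m}" "s \<in> {1..m}" "r < s"
    then show "f r < f s" unfolding f_def using strict_mono_onD[OF hx(2), of "r - 1" "s - 1"] by auto
  qed
  have smg: "strict_mono_on {1..m} g"
  proof (rule strict_mono_onI)
    fix r s :: nat assume "r \<in> {1..m}" "s \<in> {1..m}" "r < s"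
    then show "g r < g s" unfolding g_def using strict_mono_onD[OF hy(2), of "r - 1" "s - 1"] by auto
  qed
  have diag: "diagram \<sigma> = (\<lambda>i. (Suc i, Suc (\<rho> i))) ` {..<m}"
    unfolding diagram_eq len using nth by (intro image_cong) auto
  have img: "(\<lambda>(a, b). (f a, g b)) ` diagram \<sigma> = p ` {..<m}"
    unfolding diag image_image
  proof (intro image_cong refl)
    fix i assume "i \<in> {..<m}"
    then have "i < m" by simp
    then show "(case (Suc i, Suc (\<rho> i)) of (a, b) \<Rightarrow> (f a, g b)) = p i"
      using pS[of i] \<rho>P[of i] by (simp add: f_def g_def prod_eq_iff)
  qed
  have pm: "p ` {..<m} = S"
  proof (rule card_subset_eq[OF fin])
    show "p ` {..<m} \<subseteq> S" using pS by auto
    show "card (p ` {..<m}) = card S" using card_image[OF injp] m_def by simp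
  qed
  have "std_of S \<sigma>" unfolding std_of_def using perm smf smg img pm len by auto
  then show ?thesis by blast
qed

lemma std_of_std:
  fixes S :: "(nat \<times> nat) set"
  assumes "finite S" "inj_on fst S" "inj_on snd S"
  shows "std_of S (std S)"
  unfolding std_def
proof (rule theI')
  show "\<exists>!\<sigma>. std_of S \<sigma>" using std_of_exists[OF assms] std_of_unique by blast
qed

section \<open>Trees\<close>

primrec mk :: "'a \<Rightarrow> 'a list \<Rightarrow> 'a gtree" where
  "mk x [] = GLeaf x"
| "mk x (y # ys) = GNode (GLeaf x) (mk y ys)"

lemma leaves_mk: "leaves (mk x ys) = x # ys" by (induction ys arbitrary: x) auto
lemma subtrees_finite: "finite (subtrees t)" by (induction t) auto
lemma subtrees_self: "t \<in> subtrees t" by (cases t) auto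
lemma subtrees_leaves: "s \<in> subtrees t \<Longrightarrow> set (leaves s) \<subseteq> set (leaves t)" by (induction t) auto
lemma leaves_map: "leaves (map_gtree \<phi> t) = map \<phi> (leaves t)" by (induction t) auto
lemma subtrees_map: "subtrees (map_gtree \<phi> t) = map_gtree \<phi> ` subtrees t" by (induction t) auto

lemma gc_le_width: "s \<in> subtrees t \<Longrightarrow> grid_complexity (set (leaves s)) \<le> grid_width t"
  unfolding grid_width_def by (rule Max_ge) (auto simp: subtrees_finite)

lemma width_le: "(\<And>s. s \<in> subtrees t \<Longrightarrow> grid_complexity (set (leaves s)) \<le> W) \<Longrightarrow> grid_width t \<le> W"
  using subtrees_self[of t] unfolding grid_width_def by (subst Max_le_iff) (auto simp: subtrees_finite)

lemma gw_tree:
  assumes ne: "\<sigma> \<noteq> []"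
  shows "\<exists>t. grid_tree (diagram \<sigma>) t \<and> grid_width t = gw \<sigma>"
proof -
  obtain xs where xs: "set xs = diagram \<sigma>" "distinct xs"
    using finite_distinct_list[OF diagram_finite] by blast
  have "diagram \<sigma> \<noteq> {}" using ne diagram_card[of \<sigma>] by auto
  then obtain x ys where "xs = x # ys" using xs by (cases xs) auto
  then have "grid_tree (diagram \<sigma>) (mk x ys)" using xs by (simp add: grid_tree_def leaves_mk)
  then have "\<exists>w t. grid_tree (diagram \<sigma>) t \<and> grid_width t = w" by blast
  then have "\<exists>t. grid_tree (diagram \<sigma>) t \<and> grid_width t = (LEAST w. \<exists>t. grid_tree (diagram \<sigma>) t \<and> grid_width t = w)"
    by (rule LeastI_ex)
  then show ?thesis using ne by (simp add: gw_def)
qed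

lemma transfer:
  fixes S :: "(nat \<times> nat) set" and K :: nat
  assumes fin: "finite S" and i1: "inj_on fst S" and i2: "inj_on snd S" and ne: "S \<noteq> {}"
    and kx: "card (starts (fst`S)) \<le> K" and ky: "card (starts (snd`S)) \<le> K"
  shows "\<exists>t. grid_tree S t \<and> (\<forall>s\<in>subtrees t. grid_complexity (set (leaves s)) \<le> gw (std S) + K)"
proof -
  define \<sigma> where "\<sigma> = std S"
  have st: "std_of S \<sigma>" using std_of_std[OF fin i1 i2] \<sigma>_def by simp
  then obtain f g where smf: "strict_mono_on {1..length \<sigma>} f" and smg: "strict_mono_on {1..length \<sigma>} g"
    and img: "(\<lambda>(a, b). (f a, g b)) ` diagram \<sigma> = S" and perm: "is_perm \<sigma>"
    unfolding std_of_def by blast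
  have "\<sigma> \<noteq> []"
  proof
    assume "\<sigma> = []"
    then have "diagram \<sigma> = {}" by (simp add: diagram_def)
    then show False using img ne by simp
  qed
  then obtain t' where t': "grid_tree (diagram \<sigma>) t'" "grid_width t' = gw \<sigma>" using gw_tree by blast
  define \<phi> where "\<phi> = (\<lambda>(a::nat, b::nat). (f a, g b))"
  define t where "t = map_gtree \<phi> t'"
  have lt: "set (leaves t') = diagram \<sigma>" "distinct (leaves t')" using t'(1) by (auto simp: grid_tree_def)
  have gt: "grid_tree S t"
    unfolding grid_tree_def t_def leaves_map distinct_map
    using lt phi_inj[OF smf, of g] img \<phi>_def by simp
  have fxS: "f ` {1..length \<sigma>} = fst ` S"
    unfolding img[symmetric] fst_phi diagram_fst ..
  have gyS: "g ` {1..length \<sigma>} = snd ` S"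
    unfolding img[symmetric] snd_phi perm_snd[OF perm] ..
  have "\<forall>s\<in>subtrees t. grid_complexity (set (leaves s)) \<le> gw \<sigma> + K"
  proof
    fix s assume "s \<in> subtrees t"
    then obtain s' where s': "s' \<in> subtrees t'" "s = map_gtree \<phi> s'" unfolding t_def subtrees_map by blast
    define A where "A = set (leaves s')"
    have Asub: "A \<subseteq> diagram \<sigma>" using subtrees_leaves[OF s'(1)] lt A_def by simp
    have ls: "set (leaves s) = \<phi> ` A" by (simp add: s'(2) leaves_map A_def)
    have fA: "fst ` A \<subseteq> {1..length \<sigma>}" using image_mono[OF Asub, of fst] diagram_fst by simp
    have gA: "snd ` A \<subseteq> {1..length \<sigma>}" using image_mono[OF Asub, of snd] perm_snd[OF perm] by simp
    have finA: "finite A" using Asub diagram_finite finite_subset by blast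
    have gcA: "grid_complexity A \<le> gw \<sigma>" using gc_le_width[OF s'(1)] t'(2) A_def by simp
    have h1: "intervalicity (fst ` \<phi> ` A) \<le> intervalicity (fst ` A) + K"
    proof -
      have "intervalicity (fst ` \<phi> ` A) = card (starts (f ` fst ` A))"
        unfolding \<phi>_def fst_phi using finA by (simp add: intervalicity_starts)
      also have "\<dots> \<le> card (starts (fst ` A)) + card (starts (f ` {1..length \<sigma>}))"
        by (rule card_starts_image[OF smf fA])
      also have "\<dots> \<le> intervalicity (fst ` A) + K" using kx fxS finA by (simp add: intervalicity_starts)
      finally show ?thesis .
    qed
    have h2: "intervalicity (snd ` \<phi> ` A) \<le> intervalicity (snd ` A) + K"
    proof -
      have "intervalicity (snd ` \<phi> ` A) = card (starts (g ` snd ` A))"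
        unfolding \<phi>_def snd_phi using finA by (simp add: intervalicity_starts)
      also have "\<dots> \<le> card (starts (snd ` A)) + card (starts (g ` {1..length \<sigma>}))"
        by (rule card_starts_image[OF smg gA])
      also have "\<dots> \<le> intervalicity (snd ` A) + K" using ky gyS finA by (simp add: intervalicity_starts)
      finally show ?thesis .
    qed
    have "grid_complexity (\<phi> ` A) \<le> grid_complexity A + K"
      unfolding grid_complexity_def using h1 h2 by (auto simp: max_def split: if_splits)
    then show "grid_complexity (set (leaves s)) \<le> gw \<sigma> + K" using ls gcA by simp
  qed
  then show ?thesis using gt \<sigma>_def by blast
qed




section \<open>Cell graph\<close>

lemma comp_mem: "w \<in> cg_component M k l v0 \<longleftrightarrow> cg_vertex M k l w \<and> (v0, w) \<in> (cg_edges M k l)\<^sup>*"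
  by (simp add: cg_component_def)

lemma comp_col_aux:
  "\<forall>j j'. (if j \<le> j' then j' - j else j - j') = d \<longrightarrow> cg_vertex M k l (i, j) \<longrightarrow> cg_vertex M k l (i, j')
     \<longrightarrow> (i, j') \<in> cg_component M k l v0 \<longrightarrow> (i, j) \<in> cg_component M k l v0"
proof (induction d rule: less_induct)
  case (less d)
  show ?case
  proof (intro allI impI)
    fix j j' assume d: "(if j \<le> j' then j' - j else j - j') = d" and vj: "cg_vertex M k l (i, j)"
      and vj': "cg_vertex M k l (i, j')" and cj': "(i, j') \<in> cg_component M k l v0"
    show "(i, j) \<in> cg_component M k l v0"
    proof (cases "j = j'")
      case True then show ?thesis using cj' by simp
    next
      case ne: False
      show ?thesis
      proof (cases "\<forall>j''. min j' j < j'' \<and> j'' < max j' j \<longrightarrow> \<not> infinite (M i j'')")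
        case True
        then have e: "((i, j'), (i, j)) \<in> cg_edges M k l" using vj vj' ne by (simp add: cg_edges_def)
        have r: "(v0, (i, j')) \<in> (cg_edges M k l)\<^sup>*" using cj' by (simp add: comp_mem)
        have "(v0, (i, j)) \<in> (cg_edges M k l)\<^sup>*" by (rule rtrancl_into_rtrancl[OF r e])
        then show ?thesis using vj by (simp add: comp_mem)
      next
        case False
        then obtain j'' where j'': "min j' j < j''" "j'' < max j' j" "infinite (M i j'')" by blast
        have vj'': "cg_vertex M k l (i, j'')" using vj vj' j'' by (auto simp: cg_vertex_def)
        have d1: "(if j'' \<le> j' then j' - j'' else j'' - j') < d" using d j'' by (auto split: if_splits)
        have d2: "(if j \<le> j'' then j'' - j else j - j'') < d" using d j'' by (auto split: if_splits)
        have "(i, j'') \<in> cg_component M k l v0" using less.IH[OF d1] vj'' vj' cj' by blast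
        then show ?thesis using less.IH[OF d2] vj vj'' by blast
      qed
    qed
  qed
qed

lemma comp_row_aux:
  "\<forall>i i'. (if i \<le> i' then i' - i else i - i') = d \<longrightarrow> cg_vertex M k l (i, j) \<longrightarrow> cg_vertex M k l (i', j)
     \<longrightarrow> (i', j) \<in> cg_component M k l v0 \<longrightarrow> (i, j) \<in> cg_component M k l v0"
proof (induction d rule: less_induct)
  case (less d)
  show ?case
  proof (intro allI impI)
    fix i i' assume d: "(if i \<le> i' then i' - i else i - i') = d" and vj: "cg_vertex M k l (i, j)"
      and vj': "cg_vertex M k l (i', j)" and cj': "(i', j) \<in> cg_component M k l v0"
    show "(i, j) \<in> cg_component M k l v0"
    proof (cases "i = i'")
      case True then show ?thesis using cj' by simp
    next
      case ne: False
      show ?thesis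
      proof (cases "\<forall>i''. min i' i < i'' \<and> i'' < max i' i \<longrightarrow> \<not> infinite (M i'' j)")
        case True
        then have e: "((i', j), (i, j)) \<in> cg_edges M k l" using vj vj' ne by (simp add: cg_edges_def)
        have r: "(v0, (i', j)) \<in> (cg_edges M k l)\<^sup>*" using cj' by (simp add: comp_mem)
        have "(v0, (i, j)) \<in> (cg_edges M k l)\<^sup>*" by (rule rtrancl_into_rtrancl[OF r e])
        then show ?thesis using vj by (simp add: comp_mem)
      next
        case False
        then obtain i'' where i'': "min i' i < i''" "i'' < max i' i" "infinite (M i'' j)" by blast
        have vj'': "cg_vertex M k l (i'', j)" using vj vj' i'' by (auto simp: cg_vertex_def)
        have d1: "(if i'' \<le> i' then i' - i'' else i'' - i') < d" using d i'' by (auto split: if_splits)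
        have d2: "(if i \<le> i'' then i'' - i else i - i'') < d" using d i'' by (auto split: if_splits)
        have "(i'', j) \<in> cg_component M k l v0" using less.IH[OF d1] vj'' vj' cj' by blast
        then show ?thesis using less.IH[OF d2] vj vj'' by blast
      qed
    qed
  qed
qed

lemma mixed:
  assumes v: "cg_vertex M k l (i, j)"
  shows "i \<in> fst ` cg_component M k l v0 \<longleftrightarrow> j \<in> snd ` cg_component M k l v0"
proof
  assume "i \<in> fst ` cg_component M k l v0"
  then obtain j' where j': "(i, j') \<in> cg_component M k l v0" by force
  then have "cg_vertex M k l (i, j')" by (simp add: comp_mem)
  then have "(i, j) \<in> cg_component M k l v0" using comp_col_aux[of _ M k l i v0] v j' by blast
  then show "j \<in> snd ` cg_component M k l v0" by force
next
  assume "j \<in> snd ` cg_component M k l v0"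
  then obtain i' where i': "(i', j) \<in> cg_component M k l v0" by force
  then have "cg_vertex M k l (i', j)" by (simp add: comp_mem)
  then have "(i, j) \<in> cg_component M k l v0" using comp_row_aux[of _ M k l j v0] v i' by blast
  then show "i \<in> fst ` cg_component M k l v0" by force
qed

section \<open>Gridding facts\<close>

lemma cover: "(c::nat\<Rightarrow>nat) 0 < (x::nat) \<Longrightarrow> x \<le> c k \<Longrightarrow> \<exists>i<k. c i < x \<and> x \<le> c (Suc i)"
proof (induction k)
  case 0 then show ?case by linarith
next
  case (Suc k)
  show ?case
  proof (cases "x \<le> c k")
    case True then show ?thesis using Suc by (meson less_Suc_eq)
  next
    case False then show ?thesis using Suc.prems by (intro exI[of _ k]) auto
  qed
qed

lemma chain: "\<forall>i<k. (c::nat\<Rightarrow>nat) i \<le> c (Suc i) \<Longrightarrow> i \<le> j \<Longrightarrow> j \<le> k \<Longrightarrow> c i \<le> c j"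
proof (induction j rule: nat.induct)
  case zero then show ?case by simp
next
  case (Suc j)
  show ?case
  proof (cases "i = Suc j")
    case True then show ?thesis by simp
  next
    case False
    then have "c i \<le> c j" using Suc by simp
    also have "c j \<le> c (Suc j)" using Suc.prems by simp
    finally show ?thesis .
  qed
qed

lemma uniq:
  assumes m: "\<forall>i<k. (c::nat\<Rightarrow>nat) i \<le> c (Suc i)" and i: "i < k" "i' < k"
    and x: "c i < x" "x \<le> c (Suc i)" "c i' < x" "x \<le> c (Suc i')"
  shows "i = i'"
proof (rule ccontr)
  assume "i \<noteq> i'"
  then consider "i < i'" | "i' < i" by linarith
  then show False
  proof cases
    case 1 then have "c (Suc i) \<le> c i'" using chain[OF m, of "Suc i" i'] i by simp
    then show False using x by simp
  next
    case 2 then have "c (Suc i') \<le> c i" using chain[OF m, of "Suc i'" i] i by simp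
    then show False using x by simp
  qed
qed

lemma starts_generic:
  fixes S :: "(nat \<times> nat) set" and proj :: "nat \<times> nat \<Rightarrow> nat" and b :: "nat \<Rightarrow> nat"
  assumes a: "\<forall>p\<in>S. \<exists>i\<in>C. b i < proj p \<and> proj p \<le> b (Suc i)"
    and bb: "\<forall>i\<in>C. \<forall>y. b i < y \<and> y \<le> b (Suc i) \<longrightarrow> y \<in> proj ` S"
  shows "starts (proj ` S) \<subseteq> (\<lambda>i. Suc (b i)) ` C"
proof
  fix x assume x: "x \<in> starts (proj ` S)"
  then obtain p where p: "p \<in> S" "x = proj p" by (auto simp: starts_def)
  then obtain i where i: "i \<in> C" "b i < x" "x \<le> b (Suc i)" using a by blast
  have "x = Suc (b i)"
  proof (rule ccontr)
    assume "x \<noteq> Suc (b i)"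
    then have "b i < x - 1" "x - 1 \<le> b (Suc i)" using i by auto
    then have "x - 1 \<in> proj ` S" using bb i(1) by blast
    moreover have "x \<noteq> 0" using i by simp
    ultimately show False using x by (simp add: starts_def)
  qed
  then show "x \<in> (\<lambda>i. Suc (b i)) ` C" using i by blast
qed

lemma card_starts_generic:
  fixes S :: "(nat \<times> nat) set" and proj :: "nat \<times> nat \<Rightarrow> nat" and b :: "nat \<Rightarrow> nat"
  assumes a: "\<forall>p\<in>S. \<exists>i\<in>C. b i < proj p \<and> proj p \<le> b (Suc i)"
    and bb: "\<forall>i\<in>C. \<forall>y. b i < y \<and> y \<le> b (Suc i) \<longrightarrow> y \<in> proj ` S"
    and C: "C \<subseteq> {..<k}"
  shows "card (starts (proj ` S)) \<le> k"
proof -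
  have fC: "finite C" using C finite_subset by blast
  have "card (starts (proj ` S)) \<le> card ((\<lambda>i. Suc (b i)) ` C)"
    using starts_generic[OF a bb] fC by (intro card_mono) auto
  also have "\<dots> \<le> card C" using fC by (rule card_image_le)
  also have "\<dots> \<le> k" using C card_mono[of "{..<k}" C] by simp
  finally show ?thesis .
qed

lemma diag_perm_snd: "is_perm \<pi> \<Longrightarrow> snd ` diagram \<pi> = {1..length \<pi>}"
  by (rule perm_snd)

lemma diag_inj_fst: "inj_on fst (diagram \<pi>)"
  by (auto simp: inj_on_def diagram_def)

lemma diag_inj_snd: "is_perm \<pi> \<Longrightarrow> inj_on snd (diagram \<pi>)"
  by (auto simp: inj_on_def diagram_def is_perm_def nth_eq_iff_index_eq)

lemma intervalicity_range: "intervalicity {1..n} \<le> 1"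
proof -
  have "starts {1..n} \<subseteq> {1}" by (auto simp: starts_def)
  then have "card (starts {1..n}) \<le> 1" using card_mono[of "{1::nat}"] by fastforce
  then show ?thesis by (simp add: intervalicity_starts)
qed




theorem mainTheorem15:
  fixes M :: "nat \<Rightarrow> nat \<Rightarrow> nat list set" and k l :: nat
    and \<pi> :: "nat list" and c r :: "nat \<Rightarrow> nat" and v0 :: "nat \<times> nat"
  assumes classes: "\<forall>i<k. \<forall>j<l. perm_class (M i j)"
    and inf_or_empty: "\<forall>i<k. \<forall>j<l. M i j = {} \<or> infinite (M i j)"
    and disconnected: "\<not> cg_connected M k l"
    and v0: "cg_vertex M k l v0"
    and perm: "is_perm \<pi>"
    and grid: "is_gridding M k l \<pi> c r"
  shows "gw \<pi> \<le>
    max (gw (std (sub_pts \<pi> c r (comp_cols (cg_component M k l v0)) (comp_rows (cg_component M k l v0)))))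
        (gw (std (sub_pts \<pi> c r ({..<k} - comp_cols (cg_component M k l v0)) ({..<l} - comp_rows (cg_component M k l v0)))))
    + max k l"
proof -
  define Comp where "Comp = cg_component M k l v0"
  define C1 where "C1 = comp_cols Comp"
  define R1 where "R1 = comp_rows Comp"
  define S1 where "S1 = sub_pts \<pi> c r C1 R1"
  define S2 where "S2 = sub_pts \<pi> c r ({..<k} - C1) ({..<l} - R1)"
  define K where "K = max k l"
  define n where "n = length \<pi>"
  define D where "D = diagram \<pi>"
  define cell where "cell = cell_pts \<pi> c r"
  have gs: "c 0 = 0" "c k = n" "\<forall>i<k. c i \<le> c (Suc i)" "r 0 = 0" "r l = n" "\<forall>j<l. r j \<le> r (Suc j)"
    using grid unfolding is_gridding_def n_def by auto
  have gc: "\<forall>i<k. \<forall>j<l. cell i j \<noteq> {} \<longrightarrow> (\<exists>\<sigma>\<in>M i j. std_of (cell i j) \<sigma>)"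
    using grid unfolding is_gridding_def cell_def by auto
  have cell_iff: "p \<in> cell i j \<longleftrightarrow> p \<in> D \<and> c i < fst p \<and> fst p \<le> c (Suc i) \<and> r j < snd p \<and> snd p \<le> r (Suc j)" for p i j
    by (simp add: cell_def cell_pts_def D_def)
  have main: "gw \<pi> \<le> max (gw (std S1)) (gw (std S2)) + K"
  proof (cases "\<pi> = []")
    case True then show ?thesis by (simp add: gw_def)
  next
    case pne: False
    have kpos: "0 < k" "0 < l" using v0 by (auto simp: cg_vertex_def)
    have C1sub: "C1 \<subseteq> {..<k}" unfolding C1_def comp_cols_def Comp_def cg_component_def cg_vertex_def by auto
    have R1sub: "R1 \<subseteq> {..<l}" unfolding R1_def comp_rows_def Comp_def cg_component_def cg_vertex_def by auto
    have Dfst: "fst ` D = {1..n}" unfolding D_def n_def by (rule diagram_fst)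
    have Dsnd: "snd ` D = {1..n}" unfolding D_def n_def by (rule perm_snd[OF perm])
    have cellD: "\<exists>i<k. \<exists>j<l. p \<in> cell i j" if p: "p \<in> D" for p
    proof -
      have "fst p \<in> {1..n}" "snd p \<in> {1..n}" using p Dfst Dsnd by auto
      then have "c 0 < fst p" "fst p \<le> c k" "r 0 < snd p" "snd p \<le> r l" using gs by auto
      then obtain i j where "i < k" "c i < fst p" "fst p \<le> c (Suc i)" "j < l" "r j < snd p" "snd p \<le> r (Suc j)"
        using cover[of c "fst p" k] cover[of r "snd p" l] by blast
      then show ?thesis using p cell_iff by blast
    qed
    have cellv: "cg_vertex M k l (i, j)" if ij: "i < k" "j < l" "p \<in> cell i j" for p i j
    proof -
      have "cell i j \<noteq> {}" using ij by blast
      then have "\<exists>\<sigma>\<in>M i j. std_of (cell i j) \<sigma>" using gc ij by blast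
      then have "M i j \<noteq> {}" by blast
      then have "infinite (M i j)" using inf_or_empty ij by blast
      then show ?thesis using ij by (simp add: cg_vertex_def)
    qed
    have mix: "i \<in> C1 \<longleftrightarrow> j \<in> R1" if "i < k" "j < l" "p \<in> cell i j" for p i j
      using mixed[OF cellv[OF that], of v0] unfolding C1_def R1_def comp_cols_def comp_rows_def Comp_def .
    have cellu: "i = i' \<and> j = j'" if "i < k" "j < l" "p \<in> cell i j" "i' < k" "j' < l" "p \<in> cell i' j'" for p i j i' j'
    proof
      show "i = i'" using uniq[OF gs(3), of i i' "fst p"] that cell_iff by blast
      show "j = j'" using uniq[OF gs(6), of j j' "snd p"] that cell_iff by blast
    qed
    have S1_iff: "p \<in> S1 \<longleftrightarrow> (\<exists>i\<in>C1. \<exists>j\<in>R1. p \<in> cell i j)" for p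
      by (simp add: S1_def sub_pts_def cell_def)
    have S2_iff: "p \<in> S2 \<longleftrightarrow> (\<exists>i\<in>{..<k} - C1. \<exists>j\<in>{..<l} - R1. p \<in> cell i j)" for p
      by (simp add: S2_def sub_pts_def cell_def)
    have memb1: "p \<in> S1 \<longleftrightarrow> i \<in> C1" if ij: "i < k" "j < l" "p \<in> cell i j" for p i j
    proof
      assume "p \<in> S1"
      then obtain i' j' where "i' \<in> C1" "j' \<in> R1" "p \<in> cell i' j'" using S1_iff by blast
      moreover then have "i' < k" "j' < l" using C1sub R1sub by auto
      ultimately show "i \<in> C1" using cellu[OF ij] by blast
    next
      assume "i \<in> C1"
      then have "j \<in> R1" using mix[OF ij] by simp
      then show "p \<in> S1" using S1_iff ij \<open>i \<in> C1\<close> by blast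
    qed
    have memb2: "p \<in> S2 \<longleftrightarrow> i \<notin> C1" if ij: "i < k" "j < l" "p \<in> cell i j" for p i j
    proof
      assume "p \<in> S2"
      then obtain i' j' where "i' \<in> {..<k} - C1" "j' \<in> {..<l} - R1" "p \<in> cell i' j'" using S2_iff by blast
      moreover then have "i' < k" "j' < l" by auto
      ultimately show "i \<notin> C1" using cellu[OF ij] by blast
    next
      assume "i \<notin> C1"
      then have "j \<notin> R1" using mix[OF ij] by simp
      then show "p \<in> S2" using S2_iff ij \<open>i \<notin> C1\<close> by blast
    qed
    have S1D: "S1 \<subseteq> D" using S1_iff cell_iff by blast
    have S2D: "S2 \<subseteq> D" using S2_iff cell_iff by blast
    have DU: "D = S1 \<union> S2"
    proof
      show "D \<subseteq> S1 \<union> S2"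
      proof
        fix p assume "p \<in> D"
        then obtain i j where ij: "i < k" "j < l" "p \<in> cell i j" using cellD by blast
        show "p \<in> S1 \<union> S2" using memb1[OF ij] memb2[OF ij] by blast
      qed
      show "S1 \<union> S2 \<subseteq> D" using S1D S2D by blast
    qed
    have disj: "S1 \<inter> S2 = {}"
    proof (rule ccontr)
      assume "S1 \<inter> S2 \<noteq> {}"
      then obtain p where p: "p \<in> S1" "p \<in> S2" by blast
      then have "p \<in> D" using S1D by blast
      then obtain i j where ij: "i < k" "j < l" "p \<in> cell i j" using cellD by blast
      show False using memb1[OF ij] memb2[OF ij] p by blast
    qed
    have colb: "card (starts (fst ` S)) \<le> k"
      if S: "\<forall>p\<in>S. \<exists>i\<in>Cs. \<exists>j. p \<in> cell i j" "Cs \<subseteq> {..<k}"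
        "\<forall>p i j. i < k \<longrightarrow> j < l \<longrightarrow> p \<in> cell i j \<longrightarrow> (p \<in> S \<longleftrightarrow> i \<in> Cs)" for S Cs
    proof (rule card_starts_generic[where b = c and C = Cs])
      show "\<forall>p\<in>S. \<exists>i\<in>Cs. c i < fst p \<and> fst p \<le> c (Suc i)" using S(1) cell_iff by blast
      show "Cs \<subseteq> {..<k}" by fact
      show "\<forall>i\<in>Cs. \<forall>y. c i < y \<and> y \<le> c (Suc i) \<longrightarrow> y \<in> fst ` S"
      proof (intro ballI allI impI)
        fix i y assume i: "i \<in> Cs" and y: "c i < y \<and> y \<le> c (Suc i)"
        have ik: "i < k" using i S(2) by auto
        have "c (Suc i) \<le> c k" using chain[OF gs(3), of "Suc i" k] ik by simp
        then have "y \<in> fst ` D" using Dfst y gs(2) by auto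
        then obtain q where q: "q \<in> D" "fst q = y" by blast
        then obtain i' j' where ij': "i' < k" "j' < l" "q \<in> cell i' j'" using cellD by blast
        have "i' = i" using uniq[OF gs(3) ij'(1) ik, of y] ij'(3) cell_iff q y by blast
        then have "q \<in> S" using S(3) ij' i by blast
        then show "y \<in> fst ` S" using q by force
      qed
    qed
    have rowb: "card (starts (snd ` S)) \<le> l"
      if S: "\<forall>p\<in>S. \<exists>j\<in>Rs. \<exists>i. p \<in> cell i j" "Rs \<subseteq> {..<l}"
        "\<forall>p i j. i < k \<longrightarrow> j < l \<longrightarrow> p \<in> cell i j \<longrightarrow> (p \<in> S \<longleftrightarrow> j \<in> Rs)" for S Rs
    proof (rule card_starts_generic[where b = r and C = Rs])
      show "\<forall>p\<in>S. \<exists>j\<in>Rs. r j < snd p \<and> snd p \<le> r (Suc j)" using S(1) cell_iff by blast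
      show "Rs \<subseteq> {..<l}" by fact
      show "\<forall>j\<in>Rs. \<forall>y. r j < y \<and> y \<le> r (Suc j) \<longrightarrow> y \<in> snd ` S"
      proof (intro ballI allI impI)
        fix j y assume j: "j \<in> Rs" and y: "r j < y \<and> y \<le> r (Suc j)"
        have jl: "j < l" using j S(2) by auto
        have "r (Suc j) \<le> r l" using chain[OF gs(6), of "Suc j" l] jl by simp
        then have "y \<in> snd ` D" using Dsnd y gs(5) by auto
        then obtain q where q: "q \<in> D" "snd q = y" by blast
        then obtain i' j' where ij': "i' < k" "j' < l" "q \<in> cell i' j'" using cellD by blast
        have "j' = j" using uniq[OF gs(6) ij'(2) jl, of y] ij'(3) cell_iff q y by blast
        then have "q \<in> S" using S(3) ij' j by blast
        then show "y \<in> snd ` S" using q by force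
      qed
    qed
    have b1x: "card (starts (fst ` S1)) \<le> K"
    proof -
      have "card (starts (fst ` S1)) \<le> k"
      proof (rule colb[OF _ C1sub])
        show "\<forall>p\<in>S1. \<exists>i\<in>C1. \<exists>j. p \<in> cell i j" using S1_iff by blast
        show "\<forall>p i j. i < k \<longrightarrow> j < l \<longrightarrow> p \<in> cell i j \<longrightarrow> (p \<in> S1 \<longleftrightarrow> i \<in> C1)" using memb1 by blast
      qed
      then show ?thesis unfolding K_def by simp
    qed
    have b1y: "card (starts (snd ` S1)) \<le> K"
    proof -
      have "card (starts (snd ` S1)) \<le> l"
      proof (rule rowb[OF _ R1sub])
        show "\<forall>p\<in>S1. \<exists>j\<in>R1. \<exists>i. p \<in> cell i j" using S1_iff by blast
        show "\<forall>p i j. i < k \<longrightarrow> j < l \<longrightarrow> p \<in> cell i j \<longrightarrow> (p \<in> S1 \<longleftrightarrow> j \<in> R1)" using memb1 mix by blast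
      qed
      then show ?thesis unfolding K_def by simp
    qed
    have b2x: "card (starts (fst ` S2)) \<le> K"
    proof -
      have "card (starts (fst ` S2)) \<le> k"
      proof (rule colb[where Cs = "{..<k} - C1"])
        show "\<forall>p\<in>S2. \<exists>i\<in>{..<k} - C1. \<exists>j. p \<in> cell i j" using S2_iff by blast
        show "{..<k} - C1 \<subseteq> {..<k}" by blast
        show "\<forall>p i j. i < k \<longrightarrow> j < l \<longrightarrow> p \<in> cell i j \<longrightarrow> (p \<in> S2 \<longleftrightarrow> i \<in> {..<k} - C1)" using memb2 by blast
      qed
      then show ?thesis unfolding K_def by simp
    qed
    have b2y: "card (starts (snd ` S2)) \<le> K"
    proof -
      have "card (starts (snd ` S2)) \<le> l"
      proof (rule rowb[where Rs = "{..<l} - R1"])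
        show "\<forall>p\<in>S2. \<exists>j\<in>{..<l} - R1. \<exists>i. p \<in> cell i j" using S2_iff by blast
        show "{..<l} - R1 \<subseteq> {..<l}" by blast
        show "\<forall>p i j. i < k \<longrightarrow> j < l \<longrightarrow> p \<in> cell i j \<longrightarrow> (p \<in> S2 \<longleftrightarrow> j \<in> {..<l} - R1)" using memb2 mix by blast
      qed
      then show ?thesis unfolding K_def by simp
    qed
    have finD: "finite D" unfolding D_def by (rule diagram_finite)
    have injD: "inj_on fst D" "inj_on snd D" unfolding D_def using diag_inj_fst diag_inj_snd[OF perm] by auto
    have T: "\<exists>t. grid_tree S t \<and> (\<forall>s\<in>subtrees t. grid_complexity (set (leaves s)) \<le> gw (std S) + K)"
      if "S \<subseteq> D" "S \<noteq> {}" "card (starts (fst ` S)) \<le> K" "card (starts (snd ` S)) \<le> K" for S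
      using transfer[OF finite_subset[OF that(1) finD] inj_on_subset[OF injD(1) that(1)]
          inj_on_subset[OF injD(2) that(1)] that(2-4)] .
    have root: "grid_complexity D \<le> K"
    proof -
      have "grid_complexity D \<le> 1" unfolding grid_complexity_def Dfst Dsnd using intervalicity_range by simp
      then show ?thesis using kpos unfolding K_def by simp
    qed
    define W where "W = max (gw (std S1)) (gw (std S2)) + K"
    have "\<exists>t. grid_tree D t \<and> (\<forall>s\<in>subtrees t. grid_complexity (set (leaves s)) \<le> W)"
    proof (cases "S1 = {}")
      case True
      then have "S2 = D" "S2 \<noteq> {}" using DU pne by (auto simp: D_def diagram_def)
      then obtain t where "grid_tree S2 t" "\<forall>s\<in>subtrees t. grid_complexity (set (leaves s)) \<le> gw (std S2) + K"
        using T[OF S2D _ b2x b2y] by blast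
      then show ?thesis using \<open>S2 = D\<close> unfolding W_def by force
    next
      case ne1: False
      show ?thesis
      proof (cases "S2 = {}")
        case True
        then have "S1 = D" using DU by auto
        obtain t where "grid_tree S1 t" "\<forall>s\<in>subtrees t. grid_complexity (set (leaves s)) \<le> gw (std S1) + K"
          using T[OF S1D ne1 b1x b1y] by blast
        then show ?thesis using \<open>S1 = D\<close> unfolding W_def by force
      next
        case ne2: False
        obtain t1 where t1: "grid_tree S1 t1" "\<forall>s\<in>subtrees t1. grid_complexity (set (leaves s)) \<le> gw (std S1) + K"
          using T[OF S1D ne1 b1x b1y] by blast
        obtain t2 where t2: "grid_tree S2 t2" "\<forall>s\<in>subtrees t2. grid_complexity (set (leaves s)) \<le> gw (std S2) + K"
          using T[OF S2D ne2 b2x b2y] by blast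
        have gt: "grid_tree D (GNode t1 t2)"
          using t1(1) t2(1) disj DU by (auto simp: grid_tree_def)
        have "\<forall>s\<in>subtrees (GNode t1 t2). grid_complexity (set (leaves s)) \<le> W"
        proof
          fix s assume "s \<in> subtrees (GNode t1 t2)"
          then consider "s = GNode t1 t2" | "s \<in> subtrees t1" | "s \<in> subtrees t2" by auto
          then show "grid_complexity (set (leaves s)) \<le> W"
          proof cases
            case 1
            then have "set (leaves s) = D" using gt by (simp add: grid_tree_def)
            then show ?thesis using root unfolding W_def by simp
          next
            case 2 then show ?thesis using t1(2) unfolding W_def by fastforce
          next
            case 3 then show ?thesis using t2(2) unfolding W_def by fastforce
          qed
        qed
        then show ?thesis using gt by blast
      qed
    qed
    then obtain t where t: "grid_tree D t" "\<forall>s\<in>subtrees t. grid_complexity (set (leaves s)) \<le> W" by blast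
    have "gw \<pi> \<le> grid_width t"
      unfolding gw_def using pne t(1) D_def by (auto intro!: Least_le)
    also have "\<dots> \<le> W" using t(2) by (intro width_le) auto
    finally show ?thesis unfolding W_def .
  qed
  then show ?thesis unfolding S1_def S2_def C1_def R1_def Comp_def K_def .
qed


end
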